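(* Let $\kappa$ be an uncountable cardinal and let $X$ be either the Cantor cube $\{0,1\}^\kappa$ or the Tychonoff cube $[0,1]^\kappa$ (product topology). Then $X$ is reconstructible. Moreover, for every $x \in X$ the card $X \setminus \{x\}$ is not compact, not paracompact, not Lindel\"of and not normal.
   Context: For a topological space $X$ and $x \in X$, the set $X\setminus\{x\}$ carries the subspace topology. A card of $X$ is a space homeomorphic to $X \setminus \{x\}$ for some $x \in X$. The deck of $X$ is $\mathcal{D}(X)=\{[X\setminus\{x\}]_\sim : x \in X\}$, where $[Y]_\sim$ denotes the homeomorphism class of $Y$. A space $Z$ is a reconstruction of $X$ if $\mathcal{D}(Z)=\mathcal{D}(X)$. A space $X$ is reconstructible if every reconstruction of $X$ is homeomorphic to $X$. *)

theory Defs
  imports "HOL-Analysis.Analysis"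
begin

definition deleted_card :: "'a topology \<Rightarrow> 'a \<Rightarrow> 'a topology" where
  "deleted_card X x = subtopology X (topspace X - {x})"

text \<open>Equality of decks: the sets of homeomorphism classes of cards coincide.\<close>
definition same_deck :: "'a topology \<Rightarrow> 'b topology \<Rightarrow> bool" where
  "same_deck X Z \<longleftrightarrow>
     (\<forall>x\<in>topspace X. \<exists>z\<in>topspace Z. deleted_card X x homeomorphic_space deleted_card Z z) \<and>
     (\<forall>z\<in>topspace Z. \<exists>x\<in>topspace X. deleted_card Z z homeomorphic_space deleted_card X x)"

definition is_reconstruction :: "'b topology \<Rightarrow> 'a topology \<Rightarrow> bool" where
  "is_reconstruction Z X \<longleftrightarrow> same_deck Z X"

definition paracompact_space :: "'a topology \<Rightarrow> bool" where
  "paracompact_space X \<longleftrightarrow>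
     (\<forall>\<U>. (\<forall>U\<in>\<U>. openin X U) \<and> topspace X \<subseteq> \<Union>\<U> \<longrightarrow>
        (\<exists>\<V>. (\<forall>V\<in>\<V>. openin X V) \<and> topspace X \<subseteq> \<Union>\<V> \<and>
              (\<forall>V\<in>\<V>. \<exists>U\<in>\<U>. V \<subseteq> U) \<and> locally_finite_in X \<V>))"

end

theory Submission
  imports Defs
begin

definition oth :: "real \<Rightarrow> real" where "oth t = (if t = 0 then 1 else 0)"

lemma oth_ne: "oth t \<noteq> t" by (simp add: oth_def)

primrec seqF :: "('k set \<Rightarrow> real \<Rightarrow> ('k\<Rightarrow>real)\<times>('k\<Rightarrow>real)) \<Rightarrow> (('k\<Rightarrow>real) \<Rightarrow> 'k set) \<Rightarrow> nat \<Rightarrow> 'k set" where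
  "seqF Pr E 0 = {}"
| "seqF Pr E (Suc n) = seqF Pr E n \<union> E (fst (Pr (seqF Pr E n) (1 / real (Suc n)))) \<union> E (snd (Pr (seqF Pr E n) (1 / real (Suc n))))"

lemma para_normal:
  assumes R: "regular_space T" and Pc: "paracompact_space T"
  shows "normal_space T"
  unfolding normal_space_def
proof clarify
  fix S1 S2 assume S1: "closedin T S1" and S2: "closedin T S2" and d: "disjnt S1 S2"
  have S1t: "S1 \<subseteq> topspace T" and S2t: "S2 \<subseteq> topspace T" using S1 S2 closedin_subset by auto
  have ex: "\<forall>p\<in>S2. \<exists>U. openin T U \<and> p \<in> U \<and> disjnt (T closure_of U) S1"
  proof
    fix p assume p: "p \<in> S2"
    have "p \<notin> S1" using p d unfolding disjnt_def by blast
    then have pS: "p \<in> topspace T - S1" using p S2t by blast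
    then obtain U V where UV: "openin T U" "openin T V" "p \<in> U" "S1 \<subseteq> V" "disjnt U V"
      using R[unfolded regular_space_def, rule_format, OF conjI[OF S1 pS]] by blast
    have "U \<subseteq> topspace T" using UV(1) openin_subset by blast
    then have "U \<subseteq> topspace T - V" using UV(5) unfolding disjnt_def by blast
    moreover have "closedin T (topspace T - V)" using UV(2) by blast
    ultimately have "T closure_of U \<subseteq> topspace T - V" by (rule closure_of_minimal)
    then have "disjnt (T closure_of U) S1" using UV(4) unfolding disjnt_def by blast
    then show "\<exists>U. openin T U \<and> p \<in> U \<and> disjnt (T closure_of U) S1"
      using UV by blast
  qed
  obtain Up where Up0: "\<forall>p\<in>S2. openin T (Up p) \<and> p \<in> Up p \<and> disjnt (T closure_of (Up p)) S1"
    using bchoice[OF ex] by blast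
  then have Up: "openin T (Up p) \<and> p \<in> Up p \<and> disjnt (T closure_of (Up p)) S1" if "p \<in> S2" for p
    using that by blast
  define \<U> where "\<U> = insert (topspace T - S2) (Up ` S2)"
  have o1: "\<forall>U\<in>\<U>. openin T U" using Up S2 unfolding \<U>_def by blast
  have o2: "topspace T \<subseteq> \<Union>\<U>"
  proof
    fix p assume "p \<in> topspace T"
    then show "p \<in> \<Union>\<U>" using Up unfolding \<U>_def by (cases "p \<in> S2") blast+
  qed
  obtain \<V> where V: "\<forall>V\<in>\<V>. openin T V" "topspace T \<subseteq> \<Union>\<V>" "\<forall>V\<in>\<V>. \<exists>U\<in>\<U>. V \<subseteq> U"
     "locally_finite_in T \<V>"
    using Pc[unfolded paracompact_space_def, rule_format, OF conjI[OF o1 o2]] by blast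
  define \<W> where "\<W> = {V \<in> \<V>. V \<inter> S2 \<noteq> {}}"
  define Ob where "Ob = \<Union>\<W>"
  have lfW: "locally_finite_in T \<W>" by (rule locally_finite_in_subset[OF V(4)]) (auto simp: \<W>_def)
  have clO: "T closure_of Ob = \<Union>((\<lambda>S. T closure_of S) ` \<W>)"
    unfolding Ob_def by (rule closure_of_locally_finite_Union[OF lfW])
  have dV: "disjnt (T closure_of V) S1" if "V \<in> \<W>" for V
  proof -
    have VV: "V \<in> \<V>" and VS: "V \<inter> S2 \<noteq> {}" using that unfolding \<W>_def by simp_all
    obtain U where U: "U \<in> \<U>" "V \<subseteq> U" using V(3) VV by blast
    have "U \<noteq> topspace T - S2" using U(2) VS by blast
    then have "U \<in> Up ` S2" using U(1) unfolding \<U>_def by simp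
    then obtain p where p: "p \<in> S2" "U = Up p" by blast
    have "T closure_of V \<subseteq> T closure_of U" using U(2) by (rule closure_of_mono)
    moreover have "disjnt (T closure_of (Up p)) S1" using Up[OF p(1)] by simp
    ultimately show ?thesis using p(2) unfolding disjnt_def by blast
  qed
  have dO: "disjnt (T closure_of Ob) S1" unfolding clO disjnt_def using dV unfolding disjnt_def by blast
  have oO: "openin T Ob" using V(1) unfolding Ob_def \<W>_def by blast
  have "S2 \<subseteq> Ob"
  proof
    fix p assume p: "p \<in> S2"
    then obtain V where "V \<in> \<V>" "p \<in> V" using V(2) S2t by blast
    then show "p \<in> Ob" using p unfolding Ob_def \<W>_def by blast
  qed
  moreover have "S1 \<subseteq> topspace T - T closure_of Ob" using dO S1t unfolding disjnt_def by blast
  moreover have "openin T (topspace T - T closure_of Ob)" using closedin_closure_of[of T Ob] by (simp add: closedin_def)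
  moreover have "Ob \<subseteq> T closure_of Ob" by (rule closure_of_subset[OF openin_subset[OF oO]])
  ultimately have "openin T (topspace T - T closure_of Ob) \<and> openin T Ob \<and> S1 \<subseteq> topspace T - T closure_of Ob \<and> S2 \<subseteq> Ob \<and> disjnt (topspace T - T closure_of Ob) Ob"
    using oO unfolding disjnt_def by blast
  then show "\<exists>U V. openin T U \<and> openin T V \<and> S1 \<subseteq> U \<and> S2 \<subseteq> V \<and> disjnt U V"
    by blast
qed

definition nofin :: "'a topology \<Rightarrow> bool" where
  "nofin T \<longleftrightarrow> (\<forall>U p. openin T U \<and> p \<in> U \<longrightarrow> infinite U)"

lemma nofin_homeo:
  assumes "A homeomorphic_space B" "nofin B" shows "nofin A"
  unfolding nofin_def
proof (intro allI impI)
  fix U p assume Up: "openin A U \<and> p \<in> U"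
  obtain \<phi> where \<phi>: "homeomorphic_map A B \<phi>" using assms(1) homeomorphic_space by blast
  have "U \<subseteq> topspace A" using Up openin_subset by blast
  then have "openin B (\<phi> ` U)" using homeomorphic_map_openness[OF \<phi>] Up by blast
  moreover have "\<phi> p \<in> \<phi> ` U" using Up by blast
  ultimately have "infinite (\<phi> ` U)" using assms(2) unfolding nofin_def by blast
  then show "infinite U" using finite_imageI by blast
qed

lemma top_dc: "topspace (deleted_card Z z) = topspace Z - {z}" by (auto simp: deleted_card_def)

locale goodZ =
  fixes Z :: "'b topology"
  assumes good: "\<And>z. z \<in> topspace Z \<Longrightarrow> Hausdorff_space (deleted_card Z z) \<and> locally_compact_space (deleted_card Z z) \<and> nofin (deleted_card Z z)"
    and infZ: "infinite (topspace Z)"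
begin

lemma other: "finite F \<Longrightarrow> \<exists>w\<in>topspace Z. w \<notin> F"
  using infZ by (meson finite_subset subsetI)

lemma t1: "t1_space Z"
  unfolding t1_space_def
proof (intro ballI impI)
  fix p q assume p: "p \<in> topspace Z" and q: "q \<in> topspace Z" and pq: "p \<noteq> q"
  obtain w where w: "w \<in> topspace Z" "w \<notin> {p,q}" using other[of "{p,q}"] by blast
  have "t1_space (deleted_card Z w)" using good[OF w(1)] Hausdorff_imp_t1_space by blast
  moreover have "p \<in> topspace (deleted_card Z w)" "q \<in> topspace (deleted_card Z w)"
    using p q w by (auto simp: top_dc)
  ultimately obtain U' where U': "openin (deleted_card Z w) U'" "p \<in> U'" "q \<notin> U'"
    using pq unfolding t1_space_def by blast
  then obtain U where U: "openin Z U" "U' = U \<inter> (topspace Z - {w})"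
    unfolding deleted_card_def openin_subtopology by blast
  then show "\<exists>U. openin Z U \<and> p \<in> U \<and> q \<notin> U" using U' q w by blast
qed

lemma openZw: "w \<in> topspace Z \<Longrightarrow> openin Z (topspace Z - {w})"
  using closedin_t1_singleton[OF t1] openin_diff[OF openin_topspace[of Z]] by blast

lemma open_card: "w \<in> topspace Z \<Longrightarrow> openin (deleted_card Z w) U \<Longrightarrow> openin Z U"
  unfolding deleted_card_def using openin_open_subtopology[OF openZw] by blast

lemma haus: "Hausdorff_space Z"
  unfolding Hausdorff_space_def
proof (intro allI impI)
  fix p q assume pq: "p \<in> topspace Z \<and> q \<in> topspace Z \<and> p \<noteq> q"
  obtain w where w: "w \<in> topspace Z" "w \<notin> {p,q}" using other[of "{p,q}"] by blast
  have "p \<in> topspace (deleted_card Z w)" "q \<in> topspace (deleted_card Z w)"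
    using pq w by (auto simp: top_dc)
  then obtain U V where UV: "openin (deleted_card Z w) U" "openin (deleted_card Z w) V" "p \<in> U" "q \<in> V" "disjnt U V"
    using good[OF w(1)] pq unfolding Hausdorff_space_def by blast
  then show "\<exists>U V. openin Z U \<and> openin Z V \<and> p \<in> U \<and> q \<in> V \<and> disjnt U V"
    using open_card[OF w(1)] by blast
qed

lemma lc: "locally_compact_space Z"
  unfolding locally_compact_space_def
proof
  fix p assume p: "p \<in> topspace Z"
  obtain w where w: "w \<in> topspace Z" "w \<notin> {p}" using other[of "{p}"] by blast
  have "p \<in> topspace (deleted_card Z w)" using p w by (auto simp: top_dc)
  then obtain U C where UC: "openin (deleted_card Z w) U" "compactin (deleted_card Z w) C" "p \<in> U" "U \<subseteq> C"
    using good[OF w(1)] unfolding locally_compact_space_def by blast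
  have "openin Z U" using open_card[OF w(1) UC(1)] .
  moreover have "compactin Z C" using UC(2) unfolding deleted_card_def compactin_subtopology by blast
  ultimately show "\<exists>U K. openin Z U \<and> compactin Z K \<and> p \<in> U \<and> U \<subseteq> K" using UC by blast
qed

lemma nonisol: "z \<in> topspace Z \<Longrightarrow> openin Z V \<Longrightarrow> z \<in> V \<Longrightarrow> \<exists>z'\<in>V. z' \<noteq> z"
proof -
  assume z: "z \<in> topspace Z" and V: "openin Z V" "z \<in> V"
  obtain w where w: "w \<in> topspace Z" "w \<notin> {z}" using other[of "{z}"] by blast
  have "openin (deleted_card Z w) (V \<inter> (topspace Z - {w}))"
    unfolding deleted_card_def using V(1) by (rule openin_subtopology_Int)
  moreover have "z \<in> V \<inter> (topspace Z - {w})" using z V w by auto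
  ultimately have "infinite (V \<inter> (topspace Z - {w}))" using good[OF w(1)] unfolding nofin_def by blast
  then have "V \<inter> (topspace Z - {w}) - {z} \<noteq> {}" by (metis finite.emptyI finite_insert insert_Diff_single infinite_remove)
  then show "\<exists>z'\<in>V. z' \<noteq> z" by blast
qed

lemma creg: "completely_regular_space Z"
  using locally_compact_regular_imp_completely_regular_space[OF lc] haus by blast

end

locale cube =
  fixes S :: "real set" and K :: "'k set"
  assumes S0: "0 \<in> S" and S1: "1 \<in> S" and cS: "compact S" and unc: "uncountable K"
begin

abbreviation "XX \<equiv> product_topology (\<lambda>_. top_of_set S) K"
abbreviation "P \<equiv> PiE K (\<lambda>_. S)"

lemma oth_S: "oth t \<in> S" using S0 S1 by (simp add: oth_def)

lemma topX: "topspace XX = P" by simp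

lemma infK: "infinite K" using unc countable_finite by blast

lemma compX: "compact_space XX"
  by (simp add: compact_space_product_topology compact_space_subtopology compactin_euclidean_iff cS)

lemma hausX: "Hausdorff_space XX"
  by (simp add: Hausdorff_space_product_topology Hausdorff_space_subtopology)

lemma proj_cont: "k \<in> K \<Longrightarrow> continuous_map XX euclideanreal (\<lambda>z. z k)"
  using continuous_map_product_projection[of k K "\<lambda>_. top_of_set S"]
  by (simp add: continuous_map_in_subtopology)

lemma basic_open:
  assumes "finite E" "E \<subseteq> K"
  shows "openin XX {z \<in> P. \<forall>k\<in>E. \<bar>z k - y k\<bar> < r}"
  using assms
proof (induction E)
  case empty
  then show ?case using openin_topspace[of XX] by simp
next
  case (insert k E)
  have "openin XX {z \<in> topspace XX. z k \<in> ball (y k) r}"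
    by (rule openin_continuous_map_preimage[OF proj_cont]) (use insert in auto)
  then have "openin XX ({z \<in> P. \<forall>k\<in>E. \<bar>z k - y k\<bar> < r} \<inter> {z \<in> topspace XX. z k \<in> ball (y k) r})"
    using insert by (intro openin_Int) auto
  moreover have "{z \<in> P. \<forall>k\<in>E. \<bar>z k - y k\<bar> < r} \<inter> {z \<in> topspace XX. z k \<in> ball (y k) r}
      = {z \<in> P. \<forall>k\<in>insert k E. \<bar>z k - y k\<bar> < r}"
    by (auto simp: dist_real_def abs_minus_commute)
  ultimately show ?case by simp
qed

lemma nbhd:
  assumes "openin XX W" "y \<in> W"
  obtains E r where "finite E" "E \<subseteq> K" "r > 0"
    "\<And>z. z \<in> P \<Longrightarrow> (\<forall>k\<in>E. \<bar>z k - y k\<bar> < r) \<Longrightarrow> z \<in> W"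
proof -
  obtain U where U: "finite {i \<in> K. U i \<noteq> S}" "\<forall>i\<in>K. openin (top_of_set S) (U i)"
     "y \<in> PiE K U" "PiE K U \<subseteq> W"
    using assms openin_product_topology_alt[of "\<lambda>_. top_of_set S" K W] by auto
  define E where "E = {i \<in> K. U i \<noteq> S}"
  have "\<forall>i\<in>E. \<exists>e>0. \<forall>t\<in>S. dist t (y i) < e \<longrightarrow> t \<in> U i"
  proof
    fix i assume i: "i \<in> E"
    then have "openin (top_of_set S) (U i)" "y i \<in> U i" using U unfolding E_def by (auto simp: PiE_iff)
    then show "\<exists>e>0. \<forall>t\<in>S. dist t (y i) < e \<longrightarrow> t \<in> U i"
      by (auto simp: openin_euclidean_subtopology_iff)
  qed
  then obtain e where e: "\<And>i. i \<in> E \<Longrightarrow> e i > 0 \<and> (\<forall>t\<in>S. dist t (y i) < e i \<longrightarrow> t \<in> U i)"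
    by metis
  define r where "r = Min (insert 1 (e ` E))"
  have fE: "finite E" using U E_def by simp
  have r0: "r > 0" unfolding r_def using fE e by (subst Min_gr_iff) auto
  have rle: "r \<le> e i" if "i \<in> E" for i unfolding r_def using fE that by (intro Min_le) auto
  show ?thesis
  proof (rule that[OF fE _ r0])
    show "E \<subseteq> K" by (auto simp: E_def)
    fix z assume z: "z \<in> P" "\<forall>k\<in>E. \<bar>z k - y k\<bar> < r"
    have "z \<in> PiE K U"
    proof (rule PiE_I)
      fix i assume i: "i \<in> K"
      show "z i \<in> U i"
      proof (cases "i \<in> E")
        case True
        then show ?thesis using e[OF True] z rle[OF True] i by (auto simp: dist_real_def PiE_iff)
      next
        case False
        then show ?thesis using z i by (auto simp: E_def PiE_iff)
      qed
    next
      fix i assume "i \<notin> K" then show "z i = undefined" using z by auto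
    qed
    then show "z \<in> W" using U by auto
  qed
qed

lemma upd_P: "p \<in> P \<Longrightarrow> c \<in> K \<Longrightarrow> v \<in> S \<Longrightarrow> p(c := v) \<in> P"
  using PiE_fun_upd[of v "\<lambda>_. S" c p K] by (simp add: insert_absorb)

lemma open_infinite:
  assumes "openin XX W" "p \<in> W"
  shows "infinite W"
proof -
  obtain E r where E: "finite E" "E \<subseteq> K" "r > 0"
    "\<And>z. z \<in> P \<Longrightarrow> (\<forall>k\<in>E. \<bar>z k - p k\<bar> < r) \<Longrightarrow> z \<in> W"
    using nbhd[OF assms] by blast
  have pP: "p \<in> P" using assms openin_subset by fastforce
  define g where "g c = p(c := oth (p c))" for c
  have "inj_on g (K - E)"
  proof (rule inj_onI)
    fix c c' assume "c \<in> K - E" "c' \<in> K - E" "g c = g c'"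
    then show "c = c'" unfolding g_def by (metis fun_upd_apply oth_ne)
  qed
  moreover have "infinite (K - E)" using infK E(1) by simp
  moreover have "g ` (K - E) \<subseteq> W"
  proof
    fix z assume "z \<in> g ` (K - E)"
    then obtain c where c: "c \<in> K - E" "z = g c" by auto
    have "z \<in> P" using c pP oth_S upd_P unfolding g_def by auto
    moreover have "\<forall>k\<in>E. \<bar>z k - p k\<bar> < r" using c E(3) unfolding g_def by auto
    ultimately show "z \<in> W" using E(4) by blast
  qed
  ultimately show ?thesis by (metis finite_imageD finite_subset)
qed

lemma open_Y: "x \<in> P \<Longrightarrow> openin XX (P - {x})"
  using closedin_Hausdorff_singleton[OF hausX, of x] openin_diff[OF openin_topspace[of XX]] by simp

lemma osc:
  assumes x: "x \<in> P" and f: "continuous_map (subtopology XX (P - {x})) euclideanreal f" and e: "\<epsilon> > 0"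
  shows "\<exists>W. openin XX W \<and> x \<in> W \<and> (\<forall>y\<in>W-{x}. \<forall>y'\<in>W-{x}. \<bar>f y - f y'\<bar> \<le> \<epsilon>)"
proof (rule ccontr)
  assume neg: "\<not> ?thesis"
  let ?Y = "P - {x}"
  have neg': "\<exists>y\<in>W-{x}. \<exists>y'\<in>W-{x}. \<bar>f y - f y'\<bar> > \<epsilon>" if "openin XX W" "x \<in> W" for W
  proof (rule ccontr)
    assume "\<not> ?thesis"
    then have "\<forall>y\<in>W-{x}. \<forall>y'\<in>W-{x}. \<bar>f y - f y'\<bar> \<le> \<epsilon>" by (simp add: not_less)
    then show False using neg that by blast
  qed
  have oY: "openin XX ?Y" using open_Y[OF x] .
  have loc: "\<forall>y\<in>?Y. \<exists>p. finite (fst p) \<and> fst p \<subseteq> K \<and> snd p > 0 \<and> (\<forall>z\<in>?Y. (\<forall>k\<in>fst p. \<bar>z k - y k\<bar> < snd p) \<longrightarrow> \<bar>f z - f y\<bar> < \<epsilon>/4)"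
  proof
    fix y assume y: "y \<in> ?Y"
    have "openin (subtopology XX ?Y) {z \<in> topspace (subtopology XX ?Y). f z \<in> ball (f y) (\<epsilon>/4)}"
      by (rule openin_continuous_map_preimage[OF f]) simp
    moreover have "{z \<in> topspace (subtopology XX ?Y). f z \<in> ball (f y) (\<epsilon>/4)} = {z \<in> ?Y. f z \<in> ball (f y) (\<epsilon>/4)}"
      by auto
    ultimately have op: "openin XX {z \<in> ?Y. f z \<in> ball (f y) (\<epsilon>/4)}"
      using openin_open_subtopology[OF oY] by simp
    have yin: "y \<in> {z \<in> ?Y. f z \<in> ball (f y) (\<epsilon>/4)}" using y e by simp
    obtain E r where Er: "finite E" "E \<subseteq> K" "r > 0"
      "\<And>z. z \<in> P \<Longrightarrow> (\<forall>k\<in>E. \<bar>z k - y k\<bar> < r) \<Longrightarrow> z \<in> {z \<in> ?Y. f z \<in> ball (f y) (\<epsilon>/4)}"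
      using nbhd[OF op yin] by blast
    show "\<exists>p. finite (fst p) \<and> fst p \<subseteq> K \<and> snd p > 0 \<and> (\<forall>z\<in>?Y. (\<forall>k\<in>fst p. \<bar>z k - y k\<bar> < snd p) \<longrightarrow> \<bar>f z - f y\<bar> < \<epsilon>/4)"
      using Er by (intro exI[of _ "(E,r)"]) (auto simp: dist_real_def abs_minus_commute)
  qed
  obtain pp where pp: "\<forall>y\<in>?Y. finite (fst (pp y)) \<and> fst (pp y) \<subseteq> K \<and> snd (pp y) > 0 \<and> (\<forall>z\<in>?Y. (\<forall>k\<in>fst (pp y). \<bar>z k - y k\<bar> < snd (pp y)) \<longrightarrow> \<bar>f z - f y\<bar> < \<epsilon>/4)"
    using bchoice[OF loc] by blast
  define E where "E y = fst (pp y)" for y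
  define r where "r y = snd (pp y)" for y
  have Er: "finite (E y) \<and> E y \<subseteq> K \<and> r y > 0 \<and> (\<forall>z\<in>?Y. (\<forall>k\<in>E y. \<bar>z k - y k\<bar> < r y) \<longrightarrow> \<bar>f z - f y\<bar> < \<epsilon>/4)" if "y\<in>?Y" for y
    using pp that unfolding E_def r_def by blast
  have pairs: "\<forall>Fd. \<exists>pr. finite (fst Fd) \<and> fst Fd \<subseteq> K \<and> snd Fd > 0 \<longrightarrow> (fst pr \<in> ?Y \<and> snd pr \<in> ?Y \<and> (\<forall>k\<in>fst Fd. \<bar>fst pr k - x k\<bar> < snd Fd) \<and> (\<forall>k\<in>fst Fd. \<bar>snd pr k - x k\<bar> < snd Fd) \<and> \<bar>f (fst pr) - f (snd pr)\<bar> > \<epsilon>)"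
  proof (intro allI)
    fix Fd :: "'k set \<times> real"
    obtain F \<delta> where Fd: "Fd = (F, \<delta>)" by fastforce
    have "\<exists>pr. finite F \<and> F \<subseteq> K \<and> \<delta> > 0 \<longrightarrow> (fst pr \<in> ?Y \<and> snd pr \<in> ?Y \<and> (\<forall>k\<in>F. \<bar>fst pr k - x k\<bar> < \<delta>) \<and> (\<forall>k\<in>F. \<bar>snd pr k - x k\<bar> < \<delta>) \<and> \<bar>f (fst pr) - f (snd pr)\<bar> > \<epsilon>)"
    proof (cases "finite F \<and> F \<subseteq> K \<and> \<delta> > 0")
      case True
      let ?W = "{z\<in>P. \<forall>k\<in>F. \<bar>z k - x k\<bar> < \<delta>}"
      have "openin XX ?W" "x \<in> ?W" using basic_open True x by auto
      then have "\<exists>y\<in>?W-{x}. \<exists>y'\<in>?W-{x}. \<bar>f y - f y'\<bar> > \<epsilon>" by (rule neg')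
      then obtain y y' where "y \<in> ?W - {x}" "y' \<in> ?W-{x}" "\<bar>f y - f y'\<bar> > \<epsilon>" by (elim bexE)
      then show ?thesis by (intro exI[of _ "(y,y')"]) auto
    qed auto
    then show "\<exists>pr. finite (fst Fd) \<and> fst Fd \<subseteq> K \<and> snd Fd > 0 \<longrightarrow> (fst pr \<in> ?Y \<and> snd pr \<in> ?Y \<and> (\<forall>k\<in>fst Fd. \<bar>fst pr k - x k\<bar> < snd Fd) \<and> (\<forall>k\<in>fst Fd. \<bar>snd pr k - x k\<bar> < snd Fd) \<and> \<bar>f (fst pr) - f (snd pr)\<bar> > \<epsilon>)"
      by (simp add: Fd)
  qed
  obtain Pr0 where Pr0: "\<forall>Fd. finite (fst Fd) \<and> fst Fd \<subseteq> K \<and> snd Fd > 0 \<longrightarrow> (fst (Pr0 Fd) \<in> ?Y \<and> snd (Pr0 Fd) \<in> ?Y \<and> (\<forall>k\<in>fst Fd. \<bar>fst (Pr0 Fd) k - x k\<bar> < snd Fd) \<and> (\<forall>k\<in>fst Fd. \<bar>snd (Pr0 Fd) k - x k\<bar> < snd Fd) \<and> \<bar>f (fst (Pr0 Fd)) - f (snd (Pr0 Fd))\<bar> > \<epsilon>)"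
    using choice[OF pairs] by blast
  define Pr where "Pr F \<delta> = Pr0 (F, \<delta>)" for F \<delta>
  have Pr: "fst (Pr F \<delta>) \<in> ?Y \<and> snd (Pr F \<delta>) \<in> ?Y \<and> (\<forall>k\<in>F. \<bar>fst (Pr F \<delta>) k - x k\<bar> < \<delta>) \<and> (\<forall>k\<in>F. \<bar>snd (Pr F \<delta>) k - x k\<bar> < \<delta>) \<and> \<bar>f (fst (Pr F \<delta>)) - f (snd (Pr F \<delta>))\<bar> > \<epsilon>"
    if "finite F" "F \<subseteq> K" "\<delta> > 0" for F \<delta>
    using Pr0[rule_format, of "(F,\<delta>)"] that unfolding Pr_def by simp
  define Fs where "Fs = seqF Pr E"
  have Fs_fin: "finite (Fs n) \<and> Fs n \<subseteq> K" for n
  proof (induction n)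
    case 0 then show ?case by (simp add: Fs_def)
  next
    case (Suc n)
    have d0: "0 < 1 / real (Suc n)" by simp
    have "fst (Pr (Fs n) (1 / real (Suc n))) \<in> ?Y" "snd (Pr (Fs n) (1 / real (Suc n))) \<in> ?Y"
      using Pr[OF conjunct1[OF Suc.IH] conjunct2[OF Suc.IH] d0] by blast+
    then show ?case using Er Suc.IH by (auto simp: Fs_def)
  qed
  have FsSuc: "Fs n \<subseteq> Fs (Suc n)" for n by (auto simp: Fs_def)
  have mono: "m \<le> n \<Longrightarrow> Fs m \<subseteq> Fs n" for m n
    using lift_Suc_mono_le[of Fs, OF FsSuc] by blast
  define C where "C = (\<Union>n. Fs n)"
  have CK: "C \<subseteq> K" using Fs_fin by (auto simp: C_def)
  have "countable C" unfolding C_def using Fs_fin by (intro countable_UN) (auto intro: countable_finite)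
  then obtain c where c: "c \<in> K" "c \<notin> C"
    by (metis countable_subset subsetI unc)
  define q where "q = x(c := oth (x c))"
  have qY: "q \<in> ?Y" unfolding q_def using upd_P[OF x c(1) oth_S] oth_ne by (metis DiffI fun_upd_same singletonD)
  have qx: "k \<noteq> c \<Longrightarrow> q k = x k" for k by (simp add: q_def)
  have fin_in: "finite A \<Longrightarrow> A \<subseteq> C \<Longrightarrow> \<exists>N. A \<subseteq> Fs N" for A
  proof (induction A rule: finite_induct)
    case empty then show ?case by simp
  next
    case (insert d A)
    then obtain N where "A \<subseteq> Fs N" by auto
    moreover obtain m where "d \<in> Fs m" using insert.prems by (auto simp: C_def)
    ultimately show ?case using mono[of N "max N m"] mono[of m "max N m"] by (intro exI[of _ "max N m"]) auto
  qed
  obtain N where N: "E q \<inter> C \<subseteq> Fs N" using fin_in[of "E q \<inter> C"] Er[OF qY] by auto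
  have rq: "r q > 0" using Er[OF qY] by auto
  obtain m :: nat where m: "1 / r q < real m" using reals_Archimedean2 by blast
  define n where "n = max N m"
  have nN: "N \<le> n" by (simp add: n_def)
  have "1 / r q < real (Suc n)" using m by (simp add: n_def)
  then have dn: "1 / real (Suc n) < r q" using rq by (simp add: divide_less_eq mult.commute)
  define y where "y = fst (Pr (Fs n) (1 / real (Suc n)))"
  define y' where "y' = snd (Pr (Fs n) (1 / real (Suc n)))"
  have PP: "y \<in> ?Y" "y' \<in> ?Y" "\<forall>k\<in>Fs n. \<bar>y k - x k\<bar> < 1 / real (Suc n)"
     "\<forall>k\<in>Fs n. \<bar>y' k - x k\<bar> < 1 / real (Suc n)" "\<bar>f y - f y'\<bar> > \<epsilon>"
    using Pr[of "Fs n" "1 / real (Suc n)"] Fs_fin unfolding y_def y'_def by auto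
  have "E y \<subseteq> Fs (Suc n)" "E y' \<subseteq> Fs (Suc n)" unfolding Fs_def y_def y'_def by auto
  then have EyC: "E y \<subseteq> C" "E y' \<subseteq> C" unfolding C_def by blast+
  define u where "u w k = (if k \<in> C then w k else q k)" for w :: "'k \<Rightarrow> real" and k
  have uY: "u w \<in> ?Y" if "w \<in> P" for w
  proof -
    have "u w \<in> P" using that qY CK unfolding u_def by (auto simp: PiE_iff extensional_def)
    moreover have "u w c \<noteq> x c" using c oth_ne unfolding u_def q_def by simp
    ultimately show ?thesis by auto
  qed
  have close1: "\<bar>f (u w) - f w\<bar> < \<epsilon>/4" if "w \<in> ?Y" "E w \<subseteq> C" for w
  proof -
    have ER: "finite (E w) \<and> E w \<subseteq> K \<and> r w > 0 \<and> (\<forall>z\<in>?Y. (\<forall>k\<in>E w. \<bar>z k - w k\<bar> < r w) \<longrightarrow> \<bar>f z - f w\<bar> < \<epsilon>/4)"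
      using Er[OF that(1)] .
    have A: "\<forall>k\<in>E w. \<bar>u w k - w k\<bar> < r w" using that(2) ER by (auto simp: u_def)
    have B: "u w \<in> ?Y" using uY that(1) by blast
    show ?thesis using ER A B by blast
  qed
  have close2: "\<bar>f (u w) - f q\<bar> < \<epsilon>/4" if "w \<in> ?Y" "\<forall>k\<in>Fs n. \<bar>w k - x k\<bar> < 1 / real (Suc n)" for w
  proof -
    have "\<forall>k\<in>E q. \<bar>u w k - q k\<bar> < r q"
    proof
      fix k assume k: "k \<in> E q"
      show "\<bar>u w k - q k\<bar> < r q"
      proof (cases "k \<in> C")
        case True
        then have "k \<in> Fs n" using N k mono[OF nN] by auto
        moreover have "k \<noteq> c" using True c by auto
        ultimately show ?thesis using that dn True qx[of k] by (auto simp: u_def)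
      qed (use rq in \<open>simp add: u_def\<close>)
    qed
    then show ?thesis using Er[OF qY] uY[of w] that by auto
  qed
  have "\<bar>f y - f y'\<bar> < \<epsilon>"
    using close1[OF PP(1) EyC(1)] close1[OF PP(2) EyC(2)] close2[OF PP(1) PP(3)] close2[OF PP(2) PP(4)]
    by linarith
  then show False using PP(5) by linarith
qed

lemma top_card: "x \<in> P \<Longrightarrow> topspace (deleted_card XX x) = P - {x}"
  by (auto simp: deleted_card_def)

lemma not_compact: assumes x: "x \<in> P" shows "\<not> compact_space (deleted_card XX x)"
proof
  assume "compact_space (deleted_card XX x)"
  then have "compactin XX (P - {x})" by (simp add: deleted_card_def compactin_subspace)
  then have "closedin XX (P-{x})" by (rule compactin_imp_closedin[OF hausX])
  then have "openin XX (P - (P - {x}))" by (simp add: closedin_def)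
  moreover have "P - (P - {x}) = {x}" using x by auto
  ultimately show False using open_infinite[of "{x}" x] by simp
qed

lemma proj_cont_card: "k \<in> K \<Longrightarrow> continuous_map (deleted_card XX x) euclideanreal (\<lambda>z. z k)"
  unfolding deleted_card_def by (rule continuous_map_from_subtopology[OF proj_cont])

lemma eq_on_K: "y \<in> P \<Longrightarrow> x \<in> P \<Longrightarrow> y \<noteq> x \<Longrightarrow> \<exists>k\<in>K. y k \<noteq> x k"
  using PiE_ext by metis

lemma not_lindelof: assumes x: "x \<in> P" shows "\<not> Lindelof_space (deleted_card XX x)"
proof
  assume L: "Lindelof_space (deleted_card XX x)"
  define U where "U k n = {y \<in> P - {x}. 1 / real (Suc n) < \<bar>y k - x k\<bar>}" for k n
  define \<U> where "\<U> = {U k n | k n. k \<in> K}"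
  have "openin (deleted_card XX x) (U k n)" if "k \<in> K" for k n
  proof -
    have "openin (deleted_card XX x) {y \<in> topspace (deleted_card XX x). y k \<in> - cball (x k) (1 / real (Suc n))}"
      by (rule openin_continuous_map_preimage[OF proj_cont_card[OF that]]) auto
    moreover have "{y \<in> topspace (deleted_card XX x). y k \<in> - cball (x k) (1 / real (Suc n))} = U k n"
      unfolding U_def top_card[OF x] by (auto simp: dist_real_def abs_minus_commute)
    ultimately show ?thesis by simp
  qed
  then have op: "\<forall>V\<in>\<U>. openin (deleted_card XX x) V" unfolding \<U>_def by blast
  have cov: "\<Union>\<U> = topspace (deleted_card XX x)"
  proof
    show "\<Union>\<U> \<subseteq> topspace (deleted_card XX x)" unfolding \<U>_def U_def top_card[OF x] by blast
    show "topspace (deleted_card XX x) \<subseteq> \<Union>\<U>"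
    proof
      fix y assume "y \<in> topspace (deleted_card XX x)"
      then have y: "y \<in> P - {x}" using top_card[OF x] by simp
      then obtain k where k: "k \<in> K" "y k \<noteq> x k" using eq_on_K x by blast
      then have "0 < \<bar>y k - x k\<bar>" by simp
      then obtain n where "inverse (real (Suc n)) < \<bar>y k - x k\<bar>" using reals_Archimedean by blast
      then have "y \<in> U k n" using y by (simp add: U_def inverse_eq_divide)
      then show "y \<in> \<Union>\<U>" using k unfolding \<U>_def by blast
    qed
  qed
  obtain \<V> where V: "countable \<V>" "\<V> \<subseteq> \<U>" "\<Union>\<V> = topspace (deleted_card XX x)"
    using L op cov unfolding Lindelof_space_def by metis
  have "\<forall>V\<in>\<V>. \<exists>k. k \<in> K \<and> (\<exists>n. V = U k n)" using V(2) unfolding \<U>_def by blast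
  then obtain kk where kk: "\<And>V. V \<in> \<V> \<Longrightarrow> kk V \<in> K \<and> (\<exists>n. V = U (kk V) n)" by metis
  have "countable (kk ` \<V>)" using V(1) by simp
  then obtain c where c: "c \<in> K" "c \<notin> kk ` \<V>" by (metis countable_subset subsetI unc)
  define q where "q = x(c := oth (x c))"
  have qY: "q \<in> P - {x}" unfolding q_def using upd_P[OF x c(1) oth_S] oth_ne by (metis DiffI fun_upd_same singletonD)
  then obtain V where "V \<in> \<V>" "q \<in> V" using V(3) top_card[OF x] by blast
  then obtain n where "q \<in> U (kk V) n" using kk by blast
  then have "q (kk V) \<noteq> x (kk V)" unfolding U_def by auto
  then have "kk V = c" unfolding q_def by (metis fun_upd_other)
  then show False using c \<open>V \<in> \<V>\<close> by blast
qed

lemma closed_agree: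
  assumes x: "x \<in> P" and B: "B \<subseteq> K"
  shows "closedin (deleted_card XX x) {y \<in> P - {x}. \<forall>k\<in>B. y k = x k}"
proof -
  have "openin (deleted_card XX x) {y \<in> topspace (deleted_card XX x). y k \<in> - {x k}}" if "k \<in> B" for k
    using B that by (intro openin_continuous_map_preimage[OF proj_cont_card]) auto
  then have "openin (deleted_card XX x) (\<Union>k\<in>B. {y \<in> topspace (deleted_card XX x). y k \<in> - {x k}})"
    by blast
  moreover have "(\<Union>k\<in>B. {y \<in> topspace (deleted_card XX x). y k \<in> - {x k}}) =
      topspace (deleted_card XX x) - {y \<in> P - {x}. \<forall>k\<in>B. y k = x k}"
    using top_card[OF x] by auto
  ultimately show ?thesis unfolding closedin_def using top_card[OF x] by auto
qed

lemma not_normal: assumes x: "x \<in> P" shows "\<not> normal_space (deleted_card XX x)"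
proof
  assume N: "normal_space (deleted_card XX x)"
  obtain A where A: "A \<subseteq> K" "countable A" "infinite A" using infinite_countable_subset'[OF infK] by blast
  have KA: "infinite (K - A)"
  proof
    assume "finite (K - A)"
    then have "countable (K - A)" by (rule countable_finite)
    then have "countable (A \<union> (K - A))" using A(2) countable_Un by blast
    moreover have "A \<union> (K - A) = K" using A by auto
    ultimately have "countable K" by simp
    then show False using unc by simp
  qed
  define F1 where "F1 = {y \<in> P - {x}. \<forall>k\<in>A. y k = x k}"
  define F2 where "F2 = {y \<in> P - {x}. \<forall>k\<in>K-A. y k = x k}"
  have c1: "closedin (deleted_card XX x) F1" unfolding F1_def using closed_agree[OF x A(1)] .
  have c2: "closedin (deleted_card XX x) F2" unfolding F2_def using closed_agree[OF x, of "K - A"] by auto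
  have dj: "disjnt F1 F2"
  proof -
    have False if "y \<in> F1" "y \<in> F2" for y
    proof -
      have "\<forall>k\<in>K. y k = x k" using that unfolding F1_def F2_def by blast
      then show False using eq_on_K[of y x] x that unfolding F1_def by blast
    qed
    then show ?thesis by (auto simp: disjnt_def)
  qed
  obtain f where f: "continuous_map (deleted_card XX x) euclideanreal f" "f ` F1 \<subseteq> {0}" "f ` F2 \<subseteq> {1}"
    using Urysohn_lemma_alt[OF N c1 c2 dj] by blast
  have "continuous_map (subtopology XX (P - {x})) euclideanreal f" using f(1) by (simp add: deleted_card_def)
  then obtain W where W: "openin XX W" "x \<in> W" "\<forall>y\<in>W-{x}. \<forall>y'\<in>W-{x}. \<bar>f y - f y'\<bar> \<le> 1/2"
    using osc[OF x, of f "1/2"] by auto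
  obtain E r where Er: "finite E" "E \<subseteq> K" "r > 0"
    "\<And>z. z \<in> P \<Longrightarrow> (\<forall>k\<in>E. \<bar>z k - x k\<bar> < r) \<Longrightarrow> z \<in> W"
    using nbhd[OF W(1) W(2)] by blast
  obtain a where a: "a \<in> K - A" "a \<notin> E" using KA Er(1) by (metis Diff_iff finite_subset subsetI)
  obtain b where b: "b \<in> A" "b \<notin> E" using A(3) Er(1) by (metis finite_subset subsetI)
  define y1 where "y1 = x(a := oth (x a))"
  define y2 where "y2 = x(b := oth (x b))"
  have y1P: "y1 \<in> P" "y1 \<noteq> x" unfolding y1_def using upd_P[OF x _ oth_S] a oth_ne by (auto dest: fun_cong[of _ _ a])
  have y2P: "y2 \<in> P" "y2 \<noteq> x" unfolding y2_def using upd_P[OF x _ oth_S] b A(1) oth_ne by (auto dest: fun_cong[of _ _ b])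
  have y1W: "y1 \<in> W" using Er(3) Er(4)[of y1] y1P a unfolding y1_def by auto
  have y2W: "y2 \<in> W" using Er(3) Er(4)[of y2] y2P b unfolding y2_def by auto
  have "y1 \<in> F1" using y1P a unfolding F1_def y1_def by auto
  moreover have "y2 \<in> F2" using y2P b unfolding F2_def y2_def by auto
  ultimately have "f y1 = 0" "f y2 = 1" using f by auto
  moreover have "\<bar>f y1 - f y2\<bar> \<le> 1/2" using W(3) y1W y2W y1P(2) y2P(2) by blast
  ultimately show False by simp
qed

lemma not_para: assumes x: "x \<in> P" shows "\<not> paracompact_space (deleted_card XX x)"
proof
  assume "paracompact_space (deleted_card XX x)"
  moreover have "regular_space (deleted_card XX x)" unfolding deleted_card_def
    by (intro regular_space_subtopology compact_Hausdorff_imp_regular_space compX hausX)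
  ultimately show False using para_normal not_normal[OF x] by blast
qed

lemma card_good: assumes x1: "x1 \<in> P"
  shows "Hausdorff_space (deleted_card XX x1) \<and> locally_compact_space (deleted_card XX x1) \<and> nofin (deleted_card XX x1)"
proof (intro conjI)
  show "Hausdorff_space (deleted_card XX x1)" unfolding deleted_card_def by (rule Hausdorff_space_subtopology[OF hausX])
  show "locally_compact_space (deleted_card XX x1)" unfolding deleted_card_def
    by (rule locally_compact_space_open_subset[OF disjI1[OF hausX] compact_imp_locally_compact_space[OF compX]]) (simp add: open_Y[OF x1])
  show "nofin (deleted_card XX x1)" unfolding nofin_def
  proof (intro allI impI)
    fix U p assume "openin (deleted_card XX x1) U \<and> p \<in> U"
    then have "openin XX U" "p \<in> U" unfolding deleted_card_def using openin_open_subtopology[OF open_Y[OF x1]] by auto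
    then show "infinite U" by (rule open_infinite)
  qed
qed

lemma recon: assumes D: "same_deck Z XX" shows "Z homeomorphic_space XX"
proof -
  have D1: "\<forall>z\<in>topspace Z. \<exists>x\<in>P. deleted_card Z z homeomorphic_space deleted_card XX x"
   and D2: "\<forall>x\<in>P. \<exists>z\<in>topspace Z. deleted_card XX x homeomorphic_space deleted_card Z z"
    using D unfolding same_deck_def by simp_all
  have goodz: "Hausdorff_space (deleted_card Z z) \<and> locally_compact_space (deleted_card Z z) \<and> nofin (deleted_card Z z)"
    if z: "z \<in> topspace Z" for z
  proof -
    obtain x1 where x1: "x1 \<in> P" "deleted_card Z z homeomorphic_space deleted_card XX x1" using D1 z by blast
    show ?thesis using card_good[OF x1(1)] x1(2) homeomorphic_Hausdorff_space homeomorphic_locally_compact_space nofin_homeo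
      by blast
  qed
  define x0 where "x0 = (\<lambda>k. if k \<in> K then (0::real) else undefined)"
  have x0: "x0 \<in> P" using S0 unfolding x0_def by auto
  obtain z0 where z0: "z0 \<in> topspace Z" "deleted_card XX x0 homeomorphic_space deleted_card Z z0" using D2 x0 by blast
  obtain g h where gh: "homeomorphic_maps (deleted_card XX x0) (deleted_card Z z0) g h"
    using z0(2) unfolding homeomorphic_space_def by blast
  have cg: "continuous_map (deleted_card XX x0) (deleted_card Z z0) g" using gh unfolding homeomorphic_maps_def by blast
  have ch: "continuous_map (deleted_card Z z0) (deleted_card XX x0) h" using gh unfolding homeomorphic_maps_def by blast
  have hg: "\<And>y. y \<in> P - {x0} \<Longrightarrow> h (g y) = y" using gh unfolding homeomorphic_maps_def top_card[OF x0] by blast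
  have gh': "\<And>z. z \<in> topspace Z - {z0} \<Longrightarrow> g (h z) = z" using gh unfolding homeomorphic_maps_def top_dc by blast
  have gm0: "g \<in> topspace (deleted_card XX x0) \<rightarrow> topspace (deleted_card Z z0)"
    using cg by (simp add: continuous_map_def)
  have gm: "g y \<in> topspace Z - {z0}" if "y \<in> P - {x0}" for y
    using gm0 that by (simp add: top_dc Pi_iff)
  have hm0: "h \<in> topspace (deleted_card Z z0) \<rightarrow> topspace (deleted_card XX x0)"
    using ch by (simp add: continuous_map_def)
  have hm: "h z \<in> P - {x0}" if "z \<in> topspace Z - {z0}" for z
    using hm0 that by (simp add: top_dc Pi_iff)
  obtain k0 where k0: "k0 \<in> K" using infK by fastforce
  define p where "p = x0(k0 := 1)"
  have p: "p \<in> P - {x0}" unfolding p_def using upd_P[OF x0 k0 S1] by (auto simp: x0_def k0 dest: fun_cong[of _ _ k0])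
  have "infinite (topspace Z - {z0})"
  proof -
    have "nofin (deleted_card Z z0)" using goodz[OF z0(1)] by blast
    moreover have "openin (deleted_card Z z0) (topspace (deleted_card Z z0))" by simp
    moreover have "g p \<in> topspace (deleted_card Z z0)" using gm[OF p] by (simp add: top_dc)
    ultimately show ?thesis unfolding nofin_def top_dc by blast
  qed
  then have infZ: "infinite (topspace Z)" by (meson finite_Diff)
  interpret gz: goodZ Z using goodz infZ by unfold_locales blast+
  have hausZ: "Hausdorff_space Z" by (rule gz.haus)
  define G where "G x = (if x = x0 then z0 else g x)" for x
  have Gm: "G \<in> topspace XX \<rightarrow> topspace Z" using gm z0(1) unfolding G_def by auto
  have cont: "continuous_map XX Z G"
    unfolding continuous_map_eq_topcontinuous_at
  proof
    fix x assume x: "x \<in> topspace XX"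
    show "topcontinuous_at XX Z G x"
      unfolding topcontinuous_at_def
    proof (intro conjI x Gm allI impI)
      fix V assume V: "openin Z V \<and> G x \<in> V"
      show "\<exists>U. openin XX U \<and> x \<in> U \<and> (\<forall>y\<in>U. G y \<in> V)"
      proof (cases "x = x0")
        case False
        have "openin (deleted_card Z z0) (V \<inter> (topspace Z - {z0}))"
          unfolding deleted_card_def using V by (intro openin_subtopology_Int) blast
        then have "openin (deleted_card XX x0) {y \<in> topspace (deleted_card XX x0). g y \<in> V \<inter> (topspace Z - {z0})}"
          by (rule openin_continuous_map_preimage[OF cg])
        then have op: "openin XX {y \<in> P - {x0}. g y \<in> V \<inter> (topspace Z - {z0})}"
          unfolding deleted_card_def using openin_open_subtopology[OF open_Y[OF x0]] by simp
        have "x \<in> {y \<in> P - {x0}. g y \<in> V \<inter> (topspace Z - {z0})}"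
          using x False V gm[of x] unfolding G_def by simp
        moreover have "\<forall>y\<in>{y \<in> P - {x0}. g y \<in> V \<inter> (topspace Z - {z0})}. G y \<in> V"
          unfolding G_def by auto
        ultimately show ?thesis using op by blast
      next
        case True
        then have Vz0: "openin Z V" "z0 \<in> V" using V unfolding G_def by auto
        show ?thesis
        proof (rule ccontr)
          assume nc: "\<not> ?thesis"
          have c1: "closedin Z (topspace Z - V)" using Vz0(1) by blast
          have c2: "z0 \<in> topspace Z - (topspace Z - V)" using Vz0(2) z0(1) by simp
          have ex: "\<exists>f::_\<Rightarrow>real. continuous_map Z (top_of_set {0..1}) f \<and> f z0 = 0 \<and> f ` (topspace Z - V) \<subseteq> {1}"
            using gz.creg c1 c2 unfolding completely_regular_space_def by simp
          define \<phi> where "\<phi> = (SOME f::_\<Rightarrow>real. continuous_map Z (top_of_set {0..1}) f \<and> f z0 = 0 \<and> f ` (topspace Z - V) \<subseteq> {1})"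
          have \<phi>0: "continuous_map Z (top_of_set {0..1}) \<phi> \<and> \<phi> z0 = 0 \<and> \<phi> ` (topspace Z - V) \<subseteq> {1}"
            unfolding \<phi>_def by (rule someI_ex[OF ex])
          have \<phi>: "continuous_map Z (top_of_set {0..1}) \<phi>" "\<phi> z0 = 0" "\<phi> ` (topspace Z - V) \<subseteq> {1}"
            using \<phi>0 by simp_all
          have \<phi>': "continuous_map Z euclideanreal \<phi>" using \<phi>(1) by (simp add: continuous_map_in_subtopology)
          have cg': "continuous_map (deleted_card XX x0) Z g"
            using cg unfolding deleted_card_def by (simp add: continuous_map_in_subtopology)
          have cf: "continuous_map (subtopology XX (P - {x0})) euclideanreal (\<phi> \<circ> g)"
            using continuous_map_compose[OF cg' \<phi>'] unfolding deleted_card_def by simp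
          obtain W where W: "openin XX W" "x0 \<in> W" "\<forall>y\<in>W-{x0}. \<forall>y'\<in>W-{x0}. \<bar>(\<phi> \<circ> g) y - (\<phi> \<circ> g) y'\<bar> \<le> 1/4"
            using osc[OF x0 cf, of "1/4"] by auto
          obtain y' where y': "y' \<in> W" "G y' \<notin> V" using nc W(1,2) True by blast
          have y'x0: "y' \<noteq> x0" using y' Vz0 unfolding G_def by auto
          have y'P: "y' \<in> P" using W(1) y'(1) openin_subset by fastforce
          have "g y' \<in> topspace Z - V" using y' y'x0 gm[of y'] y'P unfolding G_def by auto
          then have \<phi>y': "\<phi> (g y') = 1" using \<phi>(3) by blast
          have "closedin XX (P - W)" using W(1) closedin_diff[OF closedin_topspace[of XX]] by simp
          then have "compactin XX (P - W)" by (rule closedin_compact_space[OF compX])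
          moreover have "P - W \<subseteq> P - {x0}" using W(2) by blast
          ultimately have "compactin (deleted_card XX x0) (P - W)" unfolding deleted_card_def by (simp add: compactin_subtopology)
          then have "compactin (deleted_card Z z0) (g ` (P - W))" by (rule image_compactin[OF _ cg])
          then have "compactin Z (g ` (P - W))" unfolding deleted_card_def by (simp add: compactin_subtopology)
          then have "closedin Z (g ` (P - W))" by (rule compactin_imp_closedin[OF hausZ])
          then have oN: "openin Z (topspace Z - g ` (P - W))" by blast
          have oQ: "openin Z {z \<in> topspace Z. \<phi> z \<in> {..<1/2}}"
            by (rule openin_continuous_map_preimage[OF \<phi>']) simp
          have "openin Z ((topspace Z - g ` (P - W)) \<inter> {z \<in> topspace Z. \<phi> z \<in> {..<1/2}})"
            using oN oQ by blast
          moreover have "z0 \<in> (topspace Z - g ` (P - W)) \<inter> {z \<in> topspace Z. \<phi> z \<in> {..<1/2}}"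
            using z0(1) \<phi>(2) gm W(2) by auto
          ultimately obtain z where z: "z \<in> (topspace Z - g ` (P - W)) \<inter> {z \<in> topspace Z. \<phi> z \<in> {..<1/2}}" "z \<noteq> z0"
            using gz.nonisol[OF z0(1)] by blast
          define y where "y = h z"
          have yY: "y \<in> P - {x0}" unfolding y_def using hm z by blast
          have gy: "g y = z" unfolding y_def using gh' z by blast
          have "y \<in> W" using yY gy z(1) by blast
          then have "\<bar>(\<phi> \<circ> g) y - (\<phi> \<circ> g) y'\<bar> \<le> 1/4" using W(3) yY y'(1) y'x0 by blast
          then show False using \<phi>y' gy z(1) by simp
        qed
      qed
    qed
  qed
  have img: "G ` topspace XX = topspace Z"
  proof
    show "G ` topspace XX \<subseteq> topspace Z" using Gm by blast
    show "topspace Z \<subseteq> G ` topspace XX"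
    proof
      fix z assume z: "z \<in> topspace Z"
      show "z \<in> G ` topspace XX"
      proof (cases "z = z0")
        case True then show ?thesis using x0 unfolding G_def by force
      next
        case False
        then have "h z \<in> P - {x0}" "g (h z) = z" using hm gh' z by auto
        then show ?thesis unfolding G_def by force
      qed
    qed
  qed
  have inj: "inj_on G (topspace XX)"
  proof (rule inj_onI)
    fix a b assume a: "a \<in> topspace XX" and b: "b \<in> topspace XX" and eq: "G a = G b"
    show "a = b"
    proof (cases "a = x0")
      case aT: True
      show ?thesis
      proof (cases "b = x0")
        case True then show ?thesis using aT by simp
      next
        case False
        then have "g b \<in> topspace Z - {z0}" using gm b by simp
        then show ?thesis using eq aT False unfolding G_def by simp
      qed
    next
      case aF: False
      show ?thesis
      proof (cases "b = x0")
        case True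
        have "g a \<in> topspace Z - {z0}" using gm a aF by simp
        then show ?thesis using eq aF True unfolding G_def by simp
      next
        case False
        then have "g a = g b" using eq aF unfolding G_def by simp
        then have "h (g a) = h (g b)" by simp
        then show ?thesis using hg[of a] hg[of b] a b aF False by simp
      qed
    qed
  qed
  have "homeomorphic_map XX Z G"
    by (rule continuous_imp_homeomorphic_map[OF cont compX hausZ img inj])
  then show ?thesis using homeomorphic_map_imp_homeomorphic_space homeomorphic_space_sym by blast
qed

end


lemma cantor_eq: "discrete_topology {0,1::real} = top_of_set {0,1}"
proof -
  have "openin (top_of_set {0,1::real}) {x}" if "x \<in> {0,1}" for x
  proof -
    have "{x} = {0,1} \<inter> ball x (1/2)" using that by (auto simp: dist_real_def)
    then show ?thesis by (metis openin_open_Int open_ball)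
  qed
  then show ?thesis by (subst discrete_topology_unique) auto
qed

theorem mainTheorem1:
  fixes K :: "'k set" and X :: "('k \<Rightarrow> real) topology" and Z :: "'b topology"
  assumes "uncountable K"
    and "X = product_topology (\<lambda>_. discrete_topology {0, 1}) K \<or>
         X = product_topology (\<lambda>_. top_of_set {0..1}) K"
  shows "(is_reconstruction Z X \<longrightarrow> Z homeomorphic_space X) \<and>
         (\<forall>x\<in>topspace X. \<not> compact_space (deleted_card X x) \<and> \<not> paracompact_space (deleted_card X x) \<and>
            \<not> Lindelof_space (deleted_card X x) \<and> \<not> normal_space (deleted_card X x))"
proof -
  obtain S :: "real set" where S: "0 \<in> S" "1 \<in> S" "compact S" and X: "X = product_topology (\<lambda>_. top_of_set S) K"
  proof (cases "X = product_topology (\<lambda>_. discrete_topology {0, 1}) K")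
    case True
    then have "X = product_topology (\<lambda>_. top_of_set {0,1}) K" using cantor_eq by simp
    moreover have "compact {0,1::real}" by simp
    ultimately show ?thesis using that[of "{0,1}"] by simp
  next
    case False
    then have "X = product_topology (\<lambda>_. top_of_set {0..1}) K" using assms(2) by simp
    moreover have "compact {0..1::real}" by simp
    ultimately show ?thesis using that[of "{0..1}"] by simp
  qed
  interpret c: cube S K using S assms(1) by unfold_locales
  have tX: "topspace X = PiE K (\<lambda>_. S)" using X by simp
  show ?thesis
  proof (intro conjI impI ballI)
    assume "is_reconstruction Z X"
    then show "Z homeomorphic_space X" using c.recon X unfolding is_reconstruction_def by simp
  next
    fix x assume "x \<in> topspace X"
    then have x: "x \<in> PiE K (\<lambda>_. S)" using tX by simp
    show "\<not> compact_space (deleted_card X x)" using c.not_compact[OF x] X by simp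
    show "\<not> paracompact_space (deleted_card X x)" using c.not_para[OF x] X by simp
    show "\<not> Lindelof_space (deleted_card X x)" using c.not_lindelof[OF x] X by simp
    show "\<not> normal_space (deleted_card X x)" using c.not_normal[OF x] X by simp
  qed
qed

end
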